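(* Let $G$ be a group and $A$ a minimax-antifinitary $\mathbb{Z}G$-module. If $H$ is a proper subgroup of $G$ which is not contained in $\mathbf{Coc}_{\mathbb{Z}\text{-mmx}}(G)$, then $H$ is finitely generated.
   Context: An $R$-module is minimax if it has a finite series of submodules whose factors are each noetherian or artinian. For a subgroup $H$ of $G$, $C_A(H)$ is the set of elements of $A$ fixed by all of $H$. $\mathbf{Coc}_{\mathbb{Z}\text{-mmx}}(G) = \{x \in G \mid A/C_A(x) \text{ is a minimax } \mathbb{Z}\text{-module}\}$. A $\mathbb{Z}G$-module $A$ is minimax-antifinitary if $A/C_A(H)$ is a minimax $\mathbb{Z}$-module for every proper subgroup $H$ of $G$ that is not finitely generated, while $A/C_A(G)$ is not a minimax $\mathbb{Z}$-module. *)

theory Defs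
  imports "HOL-Algebra.Algebra"
begin

text \<open>Abelian groups are written multiplicatively (HOL-Algebra convention);
  a Z-module is just an abelian group, and Z-submodules are exactly subgroups.\<close>

definition noetherian_group :: "'c monoid \<Rightarrow> bool" where
  "noetherian_group M \<longleftrightarrow>
     (\<forall>f :: nat \<Rightarrow> 'c set. (\<forall>n. subgroup (f n) M \<and> f n \<subseteq> f (Suc n))
        \<longrightarrow> (\<exists>m. \<forall>k\<ge>m. f k = f m))"

definition artinian_group :: "'c monoid \<Rightarrow> bool" where
  "artinian_group M \<longleftrightarrow>
     (\<forall>f :: nat \<Rightarrow> 'c set. (\<forall>n. subgroup (f n) M \<and> f (Suc n) \<subseteq> f n)
        \<longrightarrow> (\<exists>m. \<forall>k\<ge>m. f k = f m))"

definition minimax_group :: "'c monoid \<Rightarrow> bool" where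
  "minimax_group M \<longleftrightarrow>
     (\<exists>(n::nat) (B :: nat \<Rightarrow> 'c set).
        B 0 = {\<one>\<^bsub>M\<^esub>} \<and> B n = carrier M \<and>
        (\<forall>i\<le>n. subgroup (B i) M) \<and>
        (\<forall>i<n. B i \<subseteq> B (Suc i) \<and>
           (noetherian_group ((M\<lparr>carrier := B (Suc i)\<rparr>) Mod (B i)) \<or>
            artinian_group ((M\<lparr>carrier := B (Suc i)\<rparr>) Mod (B i)))))"

definition ZG_module :: "('a, 'm) monoid_scheme \<Rightarrow> 'b monoid \<Rightarrow> ('a \<Rightarrow> 'b \<Rightarrow> 'b) \<Rightarrow> bool" where
  "ZG_module G A act \<longleftrightarrow> group G \<and> comm_group A \<and>
     (\<forall>g\<in>carrier G. act g \<in> hom A A) \<and>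
     (\<forall>a\<in>carrier A. act \<one>\<^bsub>G\<^esub> a = a) \<and>
     (\<forall>g\<in>carrier G. \<forall>h\<in>carrier G. \<forall>a\<in>carrier A. act (g \<otimes>\<^bsub>G\<^esub> h) a = act g (act h a))"

definition centralizer_mod :: "'b monoid \<Rightarrow> ('a \<Rightarrow> 'b \<Rightarrow> 'b) \<Rightarrow> 'a set \<Rightarrow> 'b set" where
  "centralizer_mod A act H = {a \<in> carrier A. \<forall>h\<in>H. act h a = a}"

definition Coc_mmx :: "('a, 'm) monoid_scheme \<Rightarrow> 'b monoid \<Rightarrow> ('a \<Rightarrow> 'b \<Rightarrow> 'b) \<Rightarrow> 'a set" where
  "Coc_mmx G A act = {x \<in> carrier G. minimax_group (A Mod centralizer_mod A act {x})}"

definition fin_gen_subgroup :: "('a, 'm) monoid_scheme \<Rightarrow> 'a set \<Rightarrow> bool" where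
  "fin_gen_subgroup G H \<longleftrightarrow> (\<exists>S. finite S \<and> S \<subseteq> carrier G \<and> H = generate G S)"

definition minimax_antifinitary :: "('a, 'm) monoid_scheme \<Rightarrow> 'b monoid \<Rightarrow> ('a \<Rightarrow> 'b \<Rightarrow> 'b) \<Rightarrow> bool" where
  "minimax_antifinitary G A act \<longleftrightarrow> ZG_module G A act \<and>
     (\<forall>H. subgroup H G \<and> H \<noteq> carrier G \<and> \<not> fin_gen_subgroup G H
        \<longrightarrow> minimax_group (A Mod centralizer_mod A act H)) \<and>
     \<not> minimax_group (A Mod centralizer_mod A act (carrier G))"

end

theory Submission
  imports Defs
begin

definition accS :: "'x set set \<Rightarrow> bool" where
  "accS P \<longleftrightarrow> (\<forall>f :: nat \<Rightarrow> 'x set. (\<forall>n. f n \<in> P \<and> f n \<subseteq> f (Suc n)) \<longrightarrow> (\<exists>m. \<forall>k\<ge>m. f k = f m))"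

definition dccS :: "'x set set \<Rightarrow> bool" where
  "dccS P \<longleftrightarrow> (\<forall>f :: nat \<Rightarrow> 'x set. (\<forall>n. f n \<in> P \<and> f (Suc n) \<subseteq> f n) \<longrightarrow> (\<exists>m. \<forall>k\<ge>m. f k = f m))"

lemma noeth_acc: "noetherian_group M = accS {H. subgroup H M}"
  unfolding noetherian_group_def accS_def by auto

lemma art_dcc: "artinian_group M = dccS {H. subgroup H M}"
  unfolding artinian_group_def dccS_def by auto

lemma accS_transfer:
  assumes "accS Q" "\<And>a. a \<in> P \<Longrightarrow> \<phi> a \<in> Q"
    "\<And>a b. a \<in> P \<Longrightarrow> b \<in> P \<Longrightarrow> a \<subseteq> b \<Longrightarrow> \<phi> a \<subseteq> \<phi> b" "inj_on \<phi> P"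
  shows "accS P"
  unfolding accS_def
proof (intro allI impI)
  fix f :: "nat \<Rightarrow> _" assume f: "\<forall>n. f n \<in> P \<and> f n \<subseteq> f (Suc n)"
  have "\<forall>n. (\<phi> \<circ> f) n \<in> Q \<and> (\<phi> \<circ> f) n \<subseteq> (\<phi> \<circ> f) (Suc n)"
  proof
    fix n
    have 1: "f n \<in> P" "f (Suc n) \<in> P" "f n \<subseteq> f (Suc n)" using f by blast+
    have "\<phi> (f n) \<in> Q" by (rule assms(2)[OF 1(1)])
    moreover have "\<phi> (f n) \<subseteq> \<phi> (f (Suc n))" by (rule assms(3)[OF 1])
    ultimately show "(\<phi> \<circ> f) n \<in> Q \<and> (\<phi> \<circ> f) n \<subseteq> (\<phi> \<circ> f) (Suc n)" by simp
  qed
  then have "\<exists>m. \<forall>k\<ge>m. \<phi> (f k) = \<phi> (f m)" using assms(1)[unfolded accS_def, rule_format, of "\<phi> \<circ> f"] by simp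
  then obtain m where m: "\<forall>k\<ge>m. \<phi> (f k) = \<phi> (f m)" by blast
  have "\<forall>k\<ge>m. f k = f m"
  proof (intro allI impI)
    fix k assume "k \<ge> m"
    then have e: "\<phi> (f k) = \<phi> (f m)" using m by blast
    have p: "f k \<in> P" "f m \<in> P" using f by blast+
    show "f k = f m" by (rule inj_onD[OF assms(4) e p])
  qed
  then show "\<exists>m. \<forall>k\<ge>m. f k = f m" by blast
qed

lemma dccS_transfer:
  assumes "dccS Q" "\<And>a. a \<in> P \<Longrightarrow> \<phi> a \<in> Q"
    "\<And>a b. a \<in> P \<Longrightarrow> b \<in> P \<Longrightarrow> a \<subseteq> b \<Longrightarrow> \<phi> a \<subseteq> \<phi> b" "inj_on \<phi> P"
  shows "dccS P"
  unfolding dccS_def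
proof (intro allI impI)
  fix f :: "nat \<Rightarrow> _" assume f: "\<forall>n. f n \<in> P \<and> f (Suc n) \<subseteq> f n"
  have "\<forall>n. (\<phi> \<circ> f) n \<in> Q \<and> (\<phi> \<circ> f) (Suc n) \<subseteq> (\<phi> \<circ> f) n"
  proof
    fix n
    have 1: "f n \<in> P" "f (Suc n) \<in> P" "f (Suc n) \<subseteq> f n" using f by blast+
    have "\<phi> (f n) \<in> Q" by (rule assms(2)[OF 1(1)])
    moreover have "\<phi> (f (Suc n)) \<subseteq> \<phi> (f n)" by (rule assms(3)[OF 1(2) 1(1) 1(3)])
    ultimately show "(\<phi> \<circ> f) n \<in> Q \<and> (\<phi> \<circ> f) (Suc n) \<subseteq> (\<phi> \<circ> f) n" by simp
  qed
  then have "\<exists>m. \<forall>k\<ge>m. \<phi> (f k) = \<phi> (f m)" using assms(1)[unfolded dccS_def, rule_format, of "\<phi> \<circ> f"] by simp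
  then obtain m where m: "\<forall>k\<ge>m. \<phi> (f k) = \<phi> (f m)" by blast
  have "\<forall>k\<ge>m. f k = f m"
  proof (intro allI impI)
    fix k assume "k \<ge> m"
    then have e: "\<phi> (f k) = \<phi> (f m)" using m by blast
    have p: "f k \<in> P" "f m \<in> P" using f by blast+
    show "f k = f m" by (rule inj_onD[OF assms(4) e p])
  qed
  then show "\<exists>m. \<forall>k\<ge>m. f k = f m" by blast
qed

definition Intv :: "('c, 'z) monoid_scheme \<Rightarrow> 'c set \<Rightarrow> 'c set \<Rightarrow> 'c set set" where
  "Intv Xg Lo Up = {Dd. subgroup Dd Xg \<and> Lo \<subseteq> Dd \<and> Dd \<subseteq> Up}"

lemma (in normal) union_img:
  assumes "subgroup T (G Mod H)"
  shows "T = (\<lambda>x. H #> x) ` (\<Union>T)"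
proof -
  have T: "T = rcosets\<^bsub>G\<lparr>carrier := \<Union>T\<rparr>\<^esub> H" by (rule factgroup_subgroup_union_factor[OF assms])
  have eq: "r_coset (G\<lparr>carrier := \<Union>T\<rparr>) = r_coset G"
    by (simp add: r_coset_def[abs_def])
  have r: "rcosets\<^bsub>G\<lparr>carrier := \<Union>T\<rparr>\<^esub> H = (\<Union>a\<in>\<Union>T. {H #> a})"
    unfolding RCOSETS_def eq by simp
  have u: "(\<Union>a\<in>\<Union>T. {H #> a}) = (\<lambda>x. H #> x) ` (\<Union>T)" by blast
  show ?thesis using T r u by simp
qed

lemma (in normal) img_union:
  assumes "subgroup D G" "H \<subseteq> D"
  shows "\<Union>((\<lambda>x. H #> x) ` D) = D"
proof
  show "\<Union>((\<lambda>x. H #> x) ` D) \<subseteq> D"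
  proof
    fix y assume "y \<in> \<Union>((\<lambda>x. H #> x) ` D)"
    then obtain d where d: "d \<in> D" "y \<in> H #> d" by blast
    then obtain h where h: "h \<in> H" "y = h \<otimes> d" unfolding r_coset_def by (auto simp only: UN_iff singleton_iff)
    have "h \<in> D" using h(1) assms(2) by blast
    from subgroup.m_closed[OF assms(1) this d(1)] show "y \<in> D" using h(2) by simp
  qed
  show "D \<subseteq> \<Union>((\<lambda>x. H #> x) ` D)"
  proof
    fix d assume d: "d \<in> D"
    then have "d \<in> carrier G" using assms subgroup.subset by blast
    then have "d \<in> H #> d" by (rule rcos_self[OF _ is_subgroup])
    then show "d \<in> \<Union>((\<lambda>x. H #> x) ` D)" using d by blast
  qed
qed

lemma (in normal) img_subgroup:
  assumes "subgroup D G"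
  shows "subgroup ((\<lambda>x. H #> x) ` D) (G Mod H)"
proof -
  interpret gh: group_hom G "G Mod H" "\<lambda>x. H #> x"
    by (simp add: factorgroup_is_group group_hom.intro group_hom_axioms.intro is_group r_coset_hom_Mod)
  show ?thesis by (rule gh.subgroup_img_is_subgroup[OF assms])
qed

lemma iso_transfer:
  assumes "\<And>a. a \<in> P \<Longrightarrow> \<phi> a \<in> Q" "\<And>b. b \<in> Q \<Longrightarrow> \<psi> b \<in> P"
    "\<And>a. a \<in> P \<Longrightarrow> \<psi> (\<phi> a) = a" "\<And>b. b \<in> Q \<Longrightarrow> \<phi> (\<psi> b) = b"
    "\<And>a b. a \<in> P \<Longrightarrow> b \<in> P \<Longrightarrow> a \<subseteq> b \<Longrightarrow> \<phi> a \<subseteq> \<phi> b"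
    "\<And>a b. a \<in> Q \<Longrightarrow> b \<in> Q \<Longrightarrow> a \<subseteq> b \<Longrightarrow> \<psi> a \<subseteq> \<psi> b"
  shows "accS P = accS Q" "dccS P = dccS Q"
proof -
  have i1: "inj_on \<phi> P" by (rule inj_on_inverseI[where g=\<psi>]) (rule assms(3))
  have i2: "inj_on \<psi> Q" by (rule inj_on_inverseI[where g=\<phi>]) (rule assms(4))
  show "accS P = accS Q"
  proof
    assume "accS P" then show "accS Q" by (rule accS_transfer[OF _ assms(2) assms(6) i2])
  next
    assume "accS Q" then show "accS P" by (rule accS_transfer[OF _ assms(1) assms(5) i1])
  qed
  show "dccS P = dccS Q"
  proof
    assume "dccS P" then show "dccS Q" by (rule dccS_transfer[OF _ assms(2) assms(6) i2])
  next
    assume "dccS Q" then show "dccS P" by (rule dccS_transfer[OF _ assms(1) assms(5) i1])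
  qed
qed

lemma (in normal) intv_corr:
  assumes B: "subgroup B (G Mod H)" and B': "subgroup B' (G Mod H)"
  shows "accS (Intv (G Mod H) B B') = accS (Intv G (\<Union>B) (\<Union>B'))"
    "dccS (Intv (G Mod H) B B') = dccS (Intv G (\<Union>B) (\<Union>B'))"
proof -
  have HB: "H \<subseteq> \<Union>B"
  proof -
    have "\<one>\<^bsub>G Mod H\<^esub> \<in> B" by (rule subgroup.one_closed[OF B])
    then show ?thesis by auto
  qed
  let ?img = "\<lambda>D. (\<lambda>x. H #> x) ` D"
  have 1: "\<Union>T \<in> Intv G (\<Union>B) (\<Union>B')" if "T \<in> Intv (G Mod H) B B'" for T
  proof -
    have "subgroup T (G Mod H)" "B \<subseteq> T" "T \<subseteq> B'" using that unfolding Intv_def by auto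
    then show ?thesis unfolding Intv_def using factgroup_subgroup_union_subgroup
      by (simp add: Union_mono)
  qed
  have 2: "?img D \<in> Intv (G Mod H) B B'" if "D \<in> Intv G (\<Union>B) (\<Union>B')" for D
  proof -
    have D: "subgroup D G" "\<Union>B \<subseteq> D" "D \<subseteq> \<Union>B'" using that unfolding Intv_def by auto
    have "B = ?img (\<Union>B)" by (rule union_img[OF B])
    also have "\<dots> \<subseteq> ?img D" using D(2) by (rule image_mono)
    finally have a: "B \<subseteq> ?img D" .
    have "?img D \<subseteq> ?img (\<Union>B')" using D(3) by (rule image_mono)
    also have "\<dots> = B'" by (rule union_img[OF B', symmetric])
    finally have b: "?img D \<subseteq> B'" .
    show ?thesis unfolding Intv_def using a b img_subgroup[OF D(1)] by simp
  qed
  have 3: "?img (\<Union>T) = T" if "T \<in> Intv (G Mod H) B B'" for T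
  proof -
    have "subgroup T (G Mod H)" using that unfolding Intv_def by auto
    then show ?thesis using union_img by simp
  qed
  have 4: "\<Union>(?img D) = D" if "D \<in> Intv G (\<Union>B) (\<Union>B')" for D
  proof -
    have D: "subgroup D G" "\<Union>B \<subseteq> D" using that unfolding Intv_def by auto
    show ?thesis by (rule img_union[OF D(1)]) (use D(2) HB in blast)
  qed
  have 5: "\<Union>a \<subseteq> \<Union>b" if "a \<subseteq> b" for a b :: "'a set set" using that by (rule Union_mono)
  have 6: "?img a \<subseteq> ?img b" if "a \<subseteq> b" for a b using that by (rule image_mono)
  show "accS (Intv (G Mod H) B B') = accS (Intv G (\<Union>B) (\<Union>B'))"
    by (rule iso_transfer(1)[where \<phi>=Union and \<psi>="?img"]) (use 1 2 3 4 5 6 in auto)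
  show "dccS (Intv (G Mod H) B B') = dccS (Intv G (\<Union>B) (\<Union>B'))"
    by (rule iso_transfer(2)[where \<phi>=Union and \<psi>="?img"]) (use 1 2 3 4 5 6 in auto)
qed

lemma (in comm_group) sub_comm:
  assumes "subgroup U G" shows "comm_group (G\<lparr>carrier := U\<rparr>)"
proof -
  have g: "group (G\<lparr>carrier := U\<rparr>)" by (rule subgroup_imp_group[OF assms])
  show ?thesis
  proof (rule group.group_comm_groupI[OF g])
    fix x y assume "x \<in> carrier (G\<lparr>carrier := U\<rparr>)" "y \<in> carrier (G\<lparr>carrier := U\<rparr>)"
    then have "x \<in> carrier G" "y \<in> carrier G" using subgroup.subset[OF assms] by auto
    then show "x \<otimes>\<^bsub>G\<lparr>carrier := U\<rparr>\<^esub> y = y \<otimes>\<^bsub>G\<lparr>carrier := U\<rparr>\<^esub> x" using m_comm by simp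
  qed
qed

lemma (in comm_group) factor_chain:
  assumes L: "subgroup L G" and U: "subgroup U G" and LU: "L \<subseteq> U"
  shows "noetherian_group ((G\<lparr>carrier := U\<rparr>) Mod L) = accS (Intv G L U)"
    "artinian_group ((G\<lparr>carrier := U\<rparr>) Mod L) = dccS (Intv G L U)"
proof -
  let ?Y = "G\<lparr>carrier := U\<rparr>"
  have cY: "comm_group ?Y" by (rule sub_comm[OF U])
  have LY: "subgroup L ?Y" by (rule subgroup_incl[OF L U LU])
  have nY: "normal L ?Y" by (rule comm_group.subgroup_imp_normal[OF cY LY])
  interpret nY: normal L ?Y by (rule nY)
  have gY: "group ?Y" using cY comm_group.axioms(2) by blast
  have e1: "{T. subgroup T (?Y Mod L)} = Intv (?Y Mod L) {L} (carrier (?Y Mod L))"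
  proof -
    have "L \<in> T" if "subgroup T (?Y Mod L)" for T
      using subgroup.one_closed[OF that] by simp
    then show ?thesis unfolding Intv_def using subgroup.subset by blast
  qed
  have s1: "subgroup {L} (?Y Mod L)"
    using group.triv_subgroup[OF nY.factorgroup_is_group] by simp
  have s2: "subgroup (carrier (?Y Mod L)) (?Y Mod L)"
    by (rule group.subgroup_self[OF nY.factorgroup_is_group])
  have u1: "\<Union>{L} = L" by simp
  have u2: "\<Union>(carrier (?Y Mod L)) = U"
  proof -
    have "carrier (?Y Mod L) = (\<lambda>x. L #>\<^bsub>?Y\<^esub> x) ` carrier ?Y" by (rule carrier_FactGroup)
    then have "\<Union>(carrier (?Y Mod L)) = \<Union>((\<lambda>x. L #>\<^bsub>?Y\<^esub> x) ` carrier ?Y)" by simp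
    also have "\<dots> = carrier ?Y"
      by (rule nY.img_union[OF group.subgroup_self[OF gY]]) (use nY.subset in simp)
    finally show ?thesis by simp
  qed
  have e2: "Intv ?Y L U = Intv G L U"
  proof -
    have "subgroup D ?Y \<longleftrightarrow> subgroup D G \<and> D \<subseteq> U" for D
    proof
      assume d: "subgroup D ?Y"
      have "D \<subseteq> U" using subgroup.subset[OF d] by simp
      then show "subgroup D G \<and> D \<subseteq> U" using incl_subgroup[OF U d] by simp
    next
      assume "subgroup D G \<and> D \<subseteq> U"
      then show "subgroup D ?Y" using subgroup_incl[OF _ U] by blast
    qed
    then show ?thesis unfolding Intv_def by blast
  qed
  show "noetherian_group (?Y Mod L) = accS (Intv G L U)"
    unfolding noeth_acc e1 nY.intv_corr(1)[OF s1 s2] u1 u2 e2 ..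
  show "artinian_group (?Y Mod L) = dccS (Intv G L U)"
    unfolding art_dcc e1 nY.intv_corr(2)[OF s1 s2] u1 u2 e2 ..
qed

lemma (in comm_group) prod_intv:
  assumes C: "subgroup C G" and C': "subgroup C' G" and M: "subgroup M G" and CC: "C \<subseteq> C'"
  shows "accS (Intv G C C') \<Longrightarrow> accS (Intv G (C <#> M) (C' <#> M))"
    "dccS (Intv G C C') \<Longrightarrow> dccS (Intv G (C <#> M) (C' <#> M))"
proof -
  let ?\<phi> = "\<lambda>D. (D \<inter> C') <#> C"
  have CM: "C \<subseteq> C <#> M"
  proof
    fix c assume c: "c \<in> C"
    have "c = c \<otimes> \<one>" using c subgroup.subset[OF C] by auto
    then show "c \<in> C <#> M" using c subgroup.one_closed[OF M] unfolding set_mult_def by blast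
  qed
  have MM: "M \<subseteq> C <#> M"
  proof
    fix m assume m: "m \<in> M"
    have "m = \<one> \<otimes> m" using m subgroup.subset[OF M] by auto
    then show "m \<in> C <#> M" using m subgroup.one_closed[OF C] unfolding set_mult_def by blast
  qed
  have 1: "?\<phi> D \<in> Intv G C C'" if "D \<in> Intv G (C <#> M) (C' <#> M)" for D
  proof -
    have D: "subgroup D G" using that unfolding Intv_def by auto
    have DC: "subgroup (D \<inter> C') G" by (rule subgroups_Inter_pair[OF D C'])
    have s: "subgroup (?\<phi> D) G" by (rule mult_subgroups[OF DC C])
    have a: "C \<subseteq> ?\<phi> D"
    proof
      fix c assume c: "c \<in> C"
      have "c = \<one> \<otimes> c" using c subgroup.subset[OF C] by auto
      moreover have "\<one> \<in> D \<inter> C'" using subgroup.one_closed[OF DC] .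
      ultimately show "c \<in> ?\<phi> D" using c unfolding set_mult_def by blast
    qed
    have b: "?\<phi> D \<subseteq> C'"
    proof
      fix y assume "y \<in> ?\<phi> D"
      then obtain x c where xc: "x \<in> D \<inter> C'" "c \<in> C" "y = x \<otimes> c" unfolding set_mult_def by blast
      have "c \<in> C'" using xc(2) CC by blast
      moreover have "x \<in> C'" using xc(1) by blast
      ultimately show "y \<in> C'" using subgroup.m_closed[OF C'] xc(3) by simp
    qed
    show ?thesis unfolding Intv_def using s a b by simp
  qed
  have 2: "?\<phi> a \<subseteq> ?\<phi> b" if "a \<subseteq> b" for a b
    using that unfolding set_mult_def by blast
  have 3: "?\<phi> D <#> M = D" if "D \<in> Intv G (C <#> M) (C' <#> M)" for D
  proof -
    have D: "subgroup D G" "C <#> M \<subseteq> D" "D \<subseteq> C' <#> M" using that unfolding Intv_def by auto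
    show ?thesis
    proof
      show "?\<phi> D <#> M \<subseteq> D"
      proof
        fix y assume "y \<in> ?\<phi> D <#> M"
        then obtain z m where zm: "z \<in> ?\<phi> D" "m \<in> M" "y = z \<otimes> m" unfolding set_mult_def by blast
        then obtain x c where xc: "x \<in> D \<inter> C'" "c \<in> C" "z = x \<otimes> c" unfolding set_mult_def by blast
        have "c \<in> D" using xc(2) CM D(2) by blast
        moreover have "x \<in> D" using xc(1) by blast
        ultimately have "z \<in> D" using subgroup.m_closed[OF D(1)] xc(3) by simp
        moreover have "m \<in> D" using zm(2) MM D(2) by blast
        ultimately show "y \<in> D" using subgroup.m_closed[OF D(1)] zm(3) by simp
      qed
      show "D \<subseteq> ?\<phi> D <#> M"
      proof
        fix d assume d: "d \<in> D"
        then have "d \<in> C' <#> M" using D(3) by blast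
        then obtain c' m where cm: "c' \<in> C'" "m \<in> M" "d = c' \<otimes> m" unfolding set_mult_def by blast
        have cG: "c' \<in> carrier G" "m \<in> carrier G" using cm subgroup.subset[OF C'] subgroup.subset[OF M] by auto
        have mD: "m \<in> D" using cm(2) MM D(2) by blast
        have "c' = d \<otimes> inv m" using cm(3) cG by (simp add: m_assoc)
        moreover have "d \<otimes> inv m \<in> D" using subgroup.m_closed[OF D(1) d subgroup.m_inv_closed[OF D(1) mD]] .
        ultimately have "c' \<in> D \<inter> C'" using cm(1) by simp
        moreover have "c' = c' \<otimes> \<one>" using cG by simp
        ultimately have "c' \<in> ?\<phi> D" using subgroup.one_closed[OF C] unfolding set_mult_def by blast
        then show "d \<in> ?\<phi> D <#> M" using cm(2,3) unfolding set_mult_def by blast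
      qed
    qed
  qed
  have inj: "inj_on ?\<phi> (Intv G (C <#> M) (C' <#> M))"
    by (rule inj_on_inverseI[where g="\<lambda>E. E <#> M"]) (rule 3)
  show "accS (Intv G C C') \<Longrightarrow> accS (Intv G (C <#> M) (C' <#> M))"
    by (rule accS_transfer[OF _ 1 2 inj])
  show "dccS (Intv G C C') \<Longrightarrow> dccS (Intv G (C <#> M) (C' <#> M))"
    by (rule dccS_transfer[OF _ 1 2 inj])
qed

lemma setmult_mono1: "Xs \<subseteq> Ys \<Longrightarrow> Xs <#>\<^bsub>Gr\<^esub> Zs \<subseteq> Ys <#>\<^bsub>Gr\<^esub> Zs"
  unfolding set_mult_def by blast

lemma (in comm_group) minimax_quot:
  assumes N: "subgroup N G" and M: "subgroup M G" and NM: "N \<subseteq> M"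
    and mm: "minimax_group (G Mod N)"
  shows "minimax_group (G Mod M)"
proof -
  obtain n B where B0: "B 0 = {\<one>\<^bsub>G Mod N\<^esub>}" and Bn: "B n = carrier (G Mod N)"
    and Bs: "\<forall>i\<le>n. subgroup (B i) (G Mod N)"
    and Bc: "\<forall>i<n. B i \<subseteq> B (Suc i) \<and>
           (noetherian_group (((G Mod N)\<lparr>carrier := B (Suc i)\<rparr>) Mod (B i)) \<or>
            artinian_group (((G Mod N)\<lparr>carrier := B (Suc i)\<rparr>) Mod (B i)))"
    using mm unfolding minimax_group_def by blast
  have nN: "normal N G" by (rule subgroup_imp_normal[OF N])
  have nM: "normal M G" by (rule subgroup_imp_normal[OF M])
  interpret nN: normal N G by (rule nN)
  interpret nM: normal M G by (rule nM)
  have cQ: "comm_group (G Mod N)" by (rule abelian_FactGroup[OF N])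
  have cQ': "comm_group (G Mod M)" by (rule abelian_FactGroup[OF M])
  define C where "C i = \<Union>(B i)" for i
  define D where "D i = C i <#> M" for i
  define B' where "B' i = (\<lambda>x. M #> x) ` D i" for i
  have Csub: "subgroup (C i) G" if "i \<le> n" for i
  proof -
    have "subgroup (B i) (G Mod N)" using Bs that by blast
    then show ?thesis unfolding C_def by (rule nN.factgroup_subgroup_union_subgroup)
  qed
  have Dsub: "subgroup (D i) G" if "i \<le> n" for i
    unfolding D_def by (rule mult_subgroups[OF Csub[OF that] M])
  have MD: "M \<subseteq> D i" if "i \<le> n" for i
  proof
    fix m assume m: "m \<in> M"
    have "m = \<one> \<otimes> m" using m subgroup.subset[OF M] by auto
    then show "m \<in> D i" unfolding D_def using m subgroup.one_closed[OF Csub[OF that]]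
      unfolding set_mult_def by blast
  qed
  have UB': "\<Union>(B' i) = D i" if "i \<le> n" for i
    unfolding B'_def by (rule nM.img_union[OF Dsub[OF that] MD[OF that]])
  have B'sub: "subgroup (B' i) (G Mod M)" if "i \<le> n" for i
    unfolding B'_def by (rule nM.img_subgroup[OF Dsub[OF that]])
  have Cmono: "C i \<subseteq> C (Suc i)" if "i < n" for i
  proof -
    have "B i \<subseteq> B (Suc i)" using Bc that by blast
    then show ?thesis unfolding C_def by (rule Union_mono)
  qed
  have B'mono: "B' i \<subseteq> B' (Suc i)" if "i < n" for i
  proof -
    have "D i \<subseteq> D (Suc i)" unfolding D_def by (rule setmult_mono1[OF Cmono[OF that]])
    then show ?thesis unfolding B'_def by (rule image_mono)
  qed
  have C0: "C 0 = N" unfolding C_def B0 by simp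
  have D0: "D 0 = M"
  proof
    show "D 0 \<subseteq> M"
    proof
      fix y assume "y \<in> D 0"
      then obtain a b where ab: "a \<in> N" "b \<in> M" "y = a \<otimes> b" unfolding D_def C0 set_mult_def by blast
      have "a \<in> M" using ab(1) NM by blast
      then show "y \<in> M" using subgroup.m_closed[OF M _ ab(2)] ab(3) by simp
    qed
    show "M \<subseteq> D 0" by (rule MD) simp
  qed
  have B'0: "B' 0 = {\<one>\<^bsub>G Mod M\<^esub>}"
  proof -
    have "M #> m = M" if "m \<in> M" for m by (rule subgroup.rcos_const[OF M is_group that])
    moreover have "\<one> \<in> M" by (rule subgroup.one_closed[OF M])
    ultimately have "B' 0 = {M}" unfolding B'_def D0 by blast
    then show ?thesis by simp
  qed
  have Cn: "C n = carrier G"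
  proof -
    have "carrier (G Mod N) = (\<lambda>x. N #> x) ` carrier G" by (rule carrier_FactGroup)
    then have "C n = \<Union>((\<lambda>x. N #> x) ` carrier G)" unfolding C_def Bn by simp
    also have "\<dots> = carrier G"
      by (rule nN.img_union[OF subgroup_self]) (rule subgroup.subset[OF N])
    finally show ?thesis .
  qed
  have Dn: "D n = carrier G"
  proof
    show "D n \<subseteq> carrier G" unfolding D_def Cn
      by (rule setmult_subset_G[OF subset_refl subgroup.subset[OF M]])
    show "carrier G \<subseteq> D n"
    proof
      fix g assume g: "g \<in> carrier G"
      have "g = g \<otimes> \<one>" using g by simp
      then show "g \<in> D n" unfolding D_def Cn set_mult_def using g subgroup.one_closed[OF M] by blast
    qed
  qed
  have B'n: "B' n = carrier (G Mod M)" unfolding B'_def Dn by (rule carrier_FactGroup[symmetric])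
  have fac: "noetherian_group (((G Mod M)\<lparr>carrier := B' (Suc i)\<rparr>) Mod (B' i)) \<or>
            artinian_group (((G Mod M)\<lparr>carrier := B' (Suc i)\<rparr>) Mod (B' i))" if i: "i < n" for i
  proof -
    have i1: "i \<le> n" "Suc i \<le> n" using i by auto
    have bs: "subgroup (B i) (G Mod N)" "subgroup (B (Suc i)) (G Mod N)" "B i \<subseteq> B (Suc i)"
      using Bs[rule_format, OF i1(1)] Bs[rule_format, OF i1(2)] conjunct1[OF Bc[rule_format, OF i]] by auto
    have f1: "noetherian_group (((G Mod N)\<lparr>carrier := B (Suc i)\<rparr>) Mod (B i)) = accS (Intv G (C i) (C (Suc i)))"
      unfolding comm_group.factor_chain(1)[OF cQ bs] nN.intv_corr(1)[OF bs(1,2)] C_def ..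
    have f1': "artinian_group (((G Mod N)\<lparr>carrier := B (Suc i)\<rparr>) Mod (B i)) = dccS (Intv G (C i) (C (Suc i)))"
      unfolding comm_group.factor_chain(2)[OF cQ bs] nN.intv_corr(2)[OF bs(1,2)] C_def ..
    have bs': "subgroup (B' i) (G Mod M)" "subgroup (B' (Suc i)) (G Mod M)" "B' i \<subseteq> B' (Suc i)"
      using B'sub[OF i1(1)] B'sub[OF i1(2)] B'mono[OF i] by blast+
    have f2: "noetherian_group (((G Mod M)\<lparr>carrier := B' (Suc i)\<rparr>) Mod (B' i)) = accS (Intv G (D i) (D (Suc i)))"
      unfolding comm_group.factor_chain(1)[OF cQ' bs'] nM.intv_corr(1)[OF bs'(1,2)] UB'[OF i1(1)] UB'[OF i1(2)] ..
    have f2': "artinian_group (((G Mod M)\<lparr>carrier := B' (Suc i)\<rparr>) Mod (B' i)) = dccS (Intv G (D i) (D (Suc i)))"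
      unfolding comm_group.factor_chain(2)[OF cQ' bs'] nM.intv_corr(2)[OF bs'(1,2)] UB'[OF i1(1)] UB'[OF i1(2)] ..
    have f3: "accS (Intv G (C i) (C (Suc i))) \<Longrightarrow> accS (Intv G (D i) (D (Suc i)))"
      unfolding D_def by (rule prod_intv(1)[OF Csub[OF i1(1)] Csub[OF i1(2)] M Cmono[OF i]])
    have f4: "dccS (Intv G (C i) (C (Suc i))) \<Longrightarrow> dccS (Intv G (D i) (D (Suc i)))"
      unfolding D_def by (rule prod_intv(2)[OF Csub[OF i1(1)] Csub[OF i1(2)] M Cmono[OF i]])
    have "noetherian_group (((G Mod N)\<lparr>carrier := B (Suc i)\<rparr>) Mod (B i)) \<or>
            artinian_group (((G Mod N)\<lparr>carrier := B (Suc i)\<rparr>) Mod (B i))" using conjunct2[OF Bc[rule_format, OF i]] .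
    then show ?thesis
    proof
      assume "noetherian_group (((G Mod N)\<lparr>carrier := B (Suc i)\<rparr>) Mod (B i))"
      then have "noetherian_group (((G Mod M)\<lparr>carrier := B' (Suc i)\<rparr>) Mod (B' i))"
        unfolding f1 f2 by (rule f3)
      then show ?thesis ..
    next
      assume "artinian_group (((G Mod N)\<lparr>carrier := B (Suc i)\<rparr>) Mod (B i))"
      then have "artinian_group (((G Mod M)\<lparr>carrier := B' (Suc i)\<rparr>) Mod (B' i))"
        unfolding f1' f2' by (rule f4)
      then show ?thesis ..
    qed
  qed
  have "B' 0 = {\<one>\<^bsub>G Mod M\<^esub>} \<and> B' n = carrier (G Mod M) \<and>
        (\<forall>i\<le>n. subgroup (B' i) (G Mod M)) \<and>
        (\<forall>i<n. B' i \<subseteq> B' (Suc i) \<and>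
           (noetherian_group (((G Mod M)\<lparr>carrier := B' (Suc i)\<rparr>) Mod (B' i)) \<or>
            artinian_group (((G Mod M)\<lparr>carrier := B' (Suc i)\<rparr>) Mod (B' i))))"
  proof (intro conjI allI impI)
    show "B' 0 = {\<one>\<^bsub>G Mod M\<^esub>}" by (rule B'0)
    show "B' n = carrier (G Mod M)" by (rule B'n)
    fix i
    show "i \<le> n \<Longrightarrow> subgroup (B' i) (G Mod M)" by (rule B'sub)
    show "i < n \<Longrightarrow> B' i \<subseteq> B' (Suc i)" by (rule B'mono)
    show "i < n \<Longrightarrow> noetherian_group (((G Mod M)\<lparr>carrier := B' (Suc i)\<rparr>) Mod (B' i)) \<or>
            artinian_group (((G Mod M)\<lparr>carrier := B' (Suc i)\<rparr>) Mod (B' i))" by (rule fac)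
  qed
  then show ?thesis unfolding minimax_group_def by (intro exI[where x=n] exI[where x=B'])
qed

lemma centralizer_subgroup:
  assumes "ZG_module G A act" "S \<subseteq> carrier G"
  shows "subgroup (centralizer_mod A act S) A"
proof -
  have cA: "comm_group A" using assms(1) unfolding ZG_module_def by (elim conjE)
  have gA: "group A" by (rule comm_group.axioms(2)[OF cA])
  have hom: "\<And>g. g \<in> carrier G \<Longrightarrow> act g \<in> hom A A"
    using assms(1) unfolding ZG_module_def by (elim conjE) blast
  have gh: "group_hom A A (act h)" if "h \<in> S" for h
  proof -
    have "h \<in> carrier G" using that assms(2) by blast
    then have "act h \<in> hom A A" by (rule hom)
    then show ?thesis unfolding group_hom_def group_hom_axioms_def using gA by simp
  qed
  show ?thesis
  proof (rule group.subgroupI[OF gA])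
    show "centralizer_mod A act S \<subseteq> carrier A" unfolding centralizer_mod_def by blast
    have "act h \<one>\<^bsub>A\<^esub> = \<one>\<^bsub>A\<^esub>" if "h \<in> S" for h
      using group_hom.hom_one[OF gh[OF that]] .
    moreover have "\<one>\<^bsub>A\<^esub> \<in> carrier A" by (rule monoid.one_closed[OF group.is_monoid[OF gA]])
    ultimately have "\<one>\<^bsub>A\<^esub> \<in> centralizer_mod A act S"
      unfolding centralizer_mod_def by blast
    then show "centralizer_mod A act S \<noteq> {}" by blast
  next
    fix a assume a: "a \<in> centralizer_mod A act S"
    then have aA: "a \<in> carrier A" and fx: "\<forall>h\<in>S. act h a = a" unfolding centralizer_mod_def by auto
    have "act h (inv\<^bsub>A\<^esub> a) = inv\<^bsub>A\<^esub> a" if "h \<in> S" for h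
      using group_hom.hom_inv[OF gh[OF that] aA] fx that by simp
    moreover have "inv\<^bsub>A\<^esub> a \<in> carrier A" by (rule group.inv_closed[OF gA aA])
    ultimately show "inv\<^bsub>A\<^esub> a \<in> centralizer_mod A act S"
      unfolding centralizer_mod_def by blast
  next
    fix a b assume a: "a \<in> centralizer_mod A act S" and b: "b \<in> centralizer_mod A act S"
    then have aA: "a \<in> carrier A" "b \<in> carrier A" and fx: "\<forall>h\<in>S. act h a = a" "\<forall>h\<in>S. act h b = b"
      unfolding centralizer_mod_def by auto
    have "act h (a \<otimes>\<^bsub>A\<^esub> b) = a \<otimes>\<^bsub>A\<^esub> b" if "h \<in> S" for h
      using group_hom.hom_mult[OF gh[OF that] aA] fx that by simp
    moreover have "a \<otimes>\<^bsub>A\<^esub> b \<in> carrier A" by (rule monoid.m_closed[OF group.is_monoid[OF gA] aA])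
    ultimately show "a \<otimes>\<^bsub>A\<^esub> b \<in> centralizer_mod A act S"
      unfolding centralizer_mod_def by blast
  qed
qed

theorem lemma2p8:
  fixes G :: "('a, 'm) monoid_scheme" and A :: "'b monoid" and act :: "'a \<Rightarrow> 'b \<Rightarrow> 'b"
  assumes "group G"
    and "minimax_antifinitary G A act"
    and "subgroup H G" and "H \<noteq> carrier G"
    and "\<not> H \<subseteq> Coc_mmx G A act"
  shows "fin_gen_subgroup G H"
proof (rule ccontr)
  assume nf: "\<not> fin_gen_subgroup G H"
  have zg: "ZG_module G A act" using assms(2) unfolding minimax_antifinitary_def by (elim conjE)
  have cA: "comm_group A" using zg unfolding ZG_module_def by (elim conjE)
  have all: "\<forall>H. subgroup H G \<and> H \<noteq> carrier G \<and> \<not> fin_gen_subgroup G H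
        \<longrightarrow> minimax_group (A Mod centralizer_mod A act H)"
    using assms(2) unfolding minimax_antifinitary_def by (elim conjE)
  have mmH: "minimax_group (A Mod centralizer_mod A act H)"
    using all[rule_format, of H] assms(3,4) nf by simp
  obtain x where x: "x \<in> H" "x \<notin> Coc_mmx G A act" using assms(5) by blast
  have xG: "x \<in> carrier G" using x(1) subgroup.subset[OF assms(3)] by blast
  have nx: "\<not> minimax_group (A Mod centralizer_mod A act {x})"
    using x(2) xG unfolding Coc_mmx_def by blast
  have s1: "subgroup (centralizer_mod A act H) A"
    by (rule centralizer_subgroup[OF zg subgroup.subset[OF assms(3)]])
  have s2: "subgroup (centralizer_mod A act {x}) A"
    by (rule centralizer_subgroup[OF zg]) (use xG in blast)
  have sub: "centralizer_mod A act H \<subseteq> centralizer_mod A act {x}"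
    using x(1) unfolding centralizer_mod_def by blast
  have "minimax_group (A Mod centralizer_mod A act {x})"
    by (rule comm_group.minimax_quot[OF cA s1 s2 sub mmH])
  then show False using nx by contradiction
qed

end
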